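(* Let $\tau=(\tau_j)_{j\in\mathbb N}$ be a renewal process with values in $\mathbb N$, $\tau_0=0$, defined on a probability space $(\Sigma,\mathcal E,\mathbf P)$ (i.e. $(\tau_i-\tau_{i-1})_{i\ge1}$ are i.i.d. positive random variables), and set $\delta_n=\mathbf 1_{\{n\in\tau\}}$. Let $\eta=(\eta_k)_{k\in\mathbb N}$ be i.i.d. real random variables on a probability space $(\Omega,\mathcal F,\mathbb P)$. Fix $\beta>0$ and $h\in\mathbb R$, assume $\mathbb E e^{\beta|\eta_0|}<\infty$, and let $\lambda(s)=\ln\mathbb E e^{s\eta_0}$. For $n\ge1$ let $$Z_n=\mathbf E\Big[\exp\Big(\sum_{k=1}^n(\beta\eta_k+h)\delta_k\Big)\delta_n\Big].$$ Set $K=2\max(e^{h+\lambda(\beta)},1)\cdot\max(e^{-h+\lambda(-\beta)},1)$. Then for every $n\ge1$ with $\mathbf P(n\in\tau)>0$, for both choices of sign $\pm$, $$\mathbb E\exp\big(\pm t(\ln Z_n-\mathbb E\ln Z_n)\big)\le \exp(nKt^2)\quad\text{for all }t\in[0,1],$$ and $$\mathbb P\Big(\pm\tfrac1n(\ln Z_n-\mathbb E\ln Z_n)>x\Big)\le\begin{cases}\exp\big(-\frac{nx^2}{4K}\big) & \text{if } x\in(0,2K],\\ \exp(-n(x-K)) & \text{if } x\in(2K,\infty).\end{cases}$$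
   Context: $\mathbf E$ denotes expectation with respect to $\mathbf P$ (over the renewal process, with $\eta$ fixed), and $\mathbb E$ denotes expectation with respect to $\mathbb P$ (over the disorder $\eta$). $Z_n$ is the partition function of the disordered pinning model. *)

theory Defs
  imports "HOL-Probability.Probability"
begin

text \<open>Renewal process built from its inter-arrival times T 0, T 1, ...
  (T i = tau_(i+1) - tau_i): tau_0 = 0, tau_j = T 0 + ... + T (j-1).\<close>
definition renewal_tau :: "(nat \<Rightarrow> 'a \<Rightarrow> nat) \<Rightarrow> nat \<Rightarrow> 'a \<Rightarrow> nat" where
  "renewal_tau T j \<omega> = (\<Sum>i<j. T i \<omega>)"

definition renewal_delta :: "(nat \<Rightarrow> 'a \<Rightarrow> nat) \<Rightarrow> nat \<Rightarrow> 'a \<Rightarrow> real" where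
  "renewal_delta T n \<omega> = (if \<exists>j. renewal_tau T j \<omega> = n then 1 else 0)"

definition pinning_Z ::
  "'a measure \<Rightarrow> (nat \<Rightarrow> 'a \<Rightarrow> nat) \<Rightarrow> (nat \<Rightarrow> 'b \<Rightarrow> real) \<Rightarrow> real \<Rightarrow> real \<Rightarrow> nat \<Rightarrow> 'b \<Rightarrow> real" where
  "pinning_Z M T \<eta> \<beta> h n x =
     (\<integral>\<omega>. exp (\<Sum>k=1..n. (\<beta> * \<eta> k x + h) * renewal_delta T k \<omega>) * renewal_delta T n \<omega> \<partial>M)"

end

theory Submission
  imports Defs
begin

lemma sinh_scale_le:
  fixes t z :: real assumes "0 \<le> t" "t \<le> 1" "0 \<le> z"
  shows "sinh (t*z) \<le> t * sinh z"
proof -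
  have "(\<lambda>z. t * sinh z - sinh (t*z)) 0 \<le> (\<lambda>z. t * sinh z - sinh (t*z)) z"
  proof (rule DERIV_nonneg_imp_nondecreasing[OF assms(3)])
    fix x assume x: "0 \<le> x" "x \<le> z"
    have "((\<lambda>z. t * sinh z - sinh (t*z)) has_real_derivative (t * cosh x - cosh (t*x) * t)) (at x)"
      by (auto intro!: derivative_eq_intros)
    moreover have "cosh (t*x) \<le> cosh x"
      using assms x by (subst cosh_real_nonneg_le_iff) (auto simp: mult_left_le_one_le)
    hence "t * cosh x - cosh (t*x) * t \<ge> 0" using assms by (simp add: algebra_simps mult_left_mono)
    ultimately show "\<exists>y. ((\<lambda>z. t * sinh z - sinh (t*z)) has_real_derivative y) (at x) \<and> y \<ge> 0" by blast
  qed
  thus ?thesis by simp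
qed
lemma abs_sinh: "\<bar>sinh (x::real)\<bar> = sinh \<bar>x\<bar>" 
  by (cases "x \<ge> 0") auto
lemma abs_sinh_scale_le:
  fixes t z :: real assumes "\<bar>t\<bar> \<le> 1"
  shows "\<bar>sinh (t*z)\<bar> \<le> \<bar>t\<bar> * \<bar>sinh z\<bar>"
proof -
  have 0: "sinh (\<bar>t\<bar>*\<bar>z\<bar>) \<le> \<bar>t\<bar> * sinh \<bar>z\<bar>" using assms by (intro sinh_scale_le) auto
  have 1: "\<bar>sinh (t*z)\<bar> = sinh (\<bar>t\<bar>*\<bar>z\<bar>)"
    using abs_sinh[of "t*z"] by (simp only: abs_mult)
  show ?thesis unfolding 1 abs_sinh[of z] using 0 .
qed
lemma cosh_m1: "cosh (x::real) - 1 = 2 * (sinh (x/2))\<^sup>2"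
proof -
  have "cosh (2*(x/2)) = cosh (x/2) ^ 2 + sinh (x/2) ^ 2" by (rule cosh_double)
  thus ?thesis using cosh_square_eq[of "x/2"] by simp
qed
lemma cosh_scale_le:
  fixes t y :: real assumes "\<bar>t\<bar> \<le> 1"
  shows "cosh (t*y) \<le> 1 + t\<^sup>2 * (cosh y - 1)"
proof -
  have "\<bar>sinh (t*(y/2))\<bar> \<le> \<bar>t\<bar> * \<bar>sinh (y/2)\<bar>" by (rule abs_sinh_scale_le[OF assms])
  hence "\<bar>sinh (t*(y/2))\<bar>\<^sup>2 \<le> (\<bar>t\<bar> * \<bar>sinh (y/2)\<bar>)\<^sup>2" by (intro power_mono) auto
  hence a: "(sinh (t*(y/2)))\<^sup>2 \<le> t\<^sup>2 * (sinh (y/2))\<^sup>2" by (simp only: power_mult_distrib power2_abs)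
  have b: "t*(y/2) = (t*y)/2" by simp
  have c: "t\<^sup>2*(cosh y - 1) = 2*(t\<^sup>2*(sinh(y/2))\<^sup>2)" by (simp add: cosh_m1)
  show ?thesis using a cosh_m1[of "t*y"] c unfolding b by linarith
qed
lemma (in prob_space) single_coord:
  fixes \<phi> L U :: "'a \<Rightarrow> real" and t :: real
  assumes phi[measurable]: "\<phi> \<in> borel_measurable M"
    and bnd: "\<And>v. v \<in> space M \<Longrightarrow> L v \<le> \<phi> v \<and> \<phi> v \<le> U v"
    and iU: "integrable M (\<lambda>v. exp (U v))" and iL: "integrable M (\<lambda>v. exp (- L v))"
    and t: "\<bar>t\<bar> \<le> 1"
  shows "integrable M \<phi>"
    and "integrable M (\<lambda>v. exp (t * (\<phi> v - (\<integral>w. \<phi> w \<partial>M))))"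
    and "(\<integral>v. exp (t * (\<phi> v - (\<integral>w. \<phi> w \<partial>M))) \<partial>M)
          \<le> exp (t\<^sup>2 * ((\<integral>v. exp (U v) \<partial>M) * (\<integral>v. exp (- L v) \<partial>M) - 1))"
proof -
  have ie: "integrable M (\<lambda>w. exp (s * \<phi> w))" if s: "\<bar>s\<bar> \<le> 1" for s
  proof (rule Bochner_Integration.integrable_bound[of _ "\<lambda>v. exp (U v) + exp (- L v)"])
    show "integrable M (\<lambda>v. exp (U v) + exp (- L v))" using iU iL by simp
    show "(\<lambda>w. exp (s * \<phi> w)) \<in> borel_measurable M" by measurable
    show "AE x in M. norm (exp (s * \<phi> x)) \<le> norm (exp (U x) + exp (- L x))"
    proof (rule AE_I2)
      fix x assume x: "x \<in> space M"
      have "s * \<phi> x \<le> \<bar>s\<bar> * \<bar>\<phi> x\<bar>" by (metis abs_ge_self abs_mult)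
      also have "\<dots> \<le> \<bar>\<phi> x\<bar>" using s by (simp add: mult_left_le_one_le)
      finally have "s * \<phi> x \<le> \<bar>\<phi> x\<bar>" .
      hence "exp (s * \<phi> x) \<le> exp \<bar>\<phi> x\<bar>" by simp
      also have "\<dots> \<le> exp (U x) + exp (- L x)" using bnd[OF x]
        by (cases "\<phi> x \<ge> 0") (auto intro: add_increasing add_increasing2)
      finally show "norm (exp (s * \<phi> x)) \<le> norm (exp (U x) + exp (- L x))" by simp
    qed
  qed
  show iphi: "integrable M \<phi>"
  proof (rule Bochner_Integration.integrable_bound[of _ "\<lambda>v. exp (\<phi> v) + exp (- \<phi> v)"])
    show "integrable M (\<lambda>v. exp (\<phi> v) + exp (- \<phi> v))" using ie[of 1] ie[of "-1"] by simp
    show "AE x in M. norm (\<phi> x) \<le> norm (exp (\<phi> x) + exp (- \<phi> x))"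
    proof (rule AE_I2)
      fix x
      have "\<bar>\<phi> x\<bar> \<le> exp \<bar>\<phi> x\<bar>" using exp_ge_add_one_self[of "\<bar>\<phi> x\<bar>"] by linarith
      also have "\<dots> \<le> exp (\<phi> x) + exp (- \<phi> x)" 
        by (cases "\<phi> x \<ge> 0") (auto intro: add_increasing add_increasing2)
      finally show "norm (\<phi> x) \<le> norm (exp (\<phi> x) + exp (- \<phi> x))" by simp
    qed
  qed simp
  define c where "c = (\<integral>w. \<phi> w \<partial>M)"
  define m where "m s = (\<integral>w. exp (s * \<phi> w) \<partial>M)" for s
  have m_nonneg: "m s \<ge> 0" for s unfolding m_def by (intro integral_nonneg_AE) auto
  have eq1: "(\<lambda>v. exp (t * (\<phi> v - c))) = (\<lambda>v. exp (t * \<phi> v) * exp (- t * c))"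
    by (auto simp: exp_add[symmetric] algebra_simps)
  show "integrable M (\<lambda>v. exp (t * (\<phi> v - (\<integral>w. \<phi> w \<partial>M))))"
    unfolding c_def[symmetric] eq1 using ie[OF t] by simp
  have I1: "(\<integral>v. exp (t * (\<phi> v - c)) \<partial>M) = m t * exp (- t * c)"
    unfolding eq1 m_def by simp
  have jensen: "exp (- t * c) \<le> m (- t)"
  proof -
    have "(\<integral>v. exp (- t * c) * (1 + (- t * \<phi> v + t * c)) \<partial>M) \<le> (\<integral>v. exp (- t * \<phi> v) \<partial>M)"
    proof (rule integral_mono)
      show "integrable M (\<lambda>v. exp (- t * c) * (1 + (- t * \<phi> v + t * c)))" using iphi by simp
      show "integrable M (\<lambda>v. exp (- t * \<phi> v))" using ie[of "-t"] t by simp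
      fix v
      have "exp (- t * \<phi> v) = exp (- t * c) * exp (- t * \<phi> v + t * c)" by (simp add: exp_add[symmetric])
      moreover have "1 + (- t * \<phi> v + t * c) \<le> exp (- t * \<phi> v + t * c)" by (rule exp_ge_add_one_self)
      ultimately show "exp (- t * c) * (1 + (- t * \<phi> v + t * c)) \<le> exp (- t * \<phi> v)" by simp
    qed
    moreover have "(\<integral>v. exp (- t * c) * (1 + (- t * \<phi> v + t * c)) \<partial>M) = exp (- t * c)"
      using iphi by (simp add: algebra_simps c_def prob_space)
    ultimately show ?thesis by (simp add: m_def)
  qed
  have key: "m t * m (- t) \<le> 1 + t\<^sup>2 * (m 1 * m (-1) - 1)"
  proof -
    have inner: "(\<integral>w. exp (t * \<phi> v) * exp (- t * \<phi> w) + exp (- t * \<phi> v) * exp (t * \<phi> w) \<partial>M)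
       \<le> (\<integral>w. 2 + t\<^sup>2 * (exp (\<phi> v) * exp (- \<phi> w) + exp (- \<phi> v) * exp (\<phi> w) - 2) \<partial>M)" for v
    proof (rule integral_mono)
      show "integrable M (\<lambda>w. exp (t * \<phi> v) * exp (- t * \<phi> w) + exp (- t * \<phi> v) * exp (t * \<phi> w))"
        using ie[of "-t"] ie[of t] t by simp
      show "integrable M (\<lambda>w. 2 + t\<^sup>2 * (exp (\<phi> v) * exp (- \<phi> w) + exp (- \<phi> v) * exp (\<phi> w) - 2))"
        using ie[of "-1"] ie[of 1] by simp
      fix w
      have H: "cosh (t * (\<phi> v - \<phi> w)) \<le> 1 + t\<^sup>2 * (cosh (\<phi> v - \<phi> w) - 1)" by (rule cosh_scale_le[OF t])
      have e1: "exp (t * \<phi> v) * exp (- t * \<phi> w) = exp (t * (\<phi> v - \<phi> w))"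
        by (simp add: exp_add[symmetric] algebra_simps)
      have e2: "exp (- t * \<phi> v) * exp (t * \<phi> w) = exp (- (t * (\<phi> v - \<phi> w)))"
        by (simp add: exp_add[symmetric] algebra_simps)
      have e3: "exp (\<phi> v) * exp (- \<phi> w) = exp (\<phi> v - \<phi> w)"
        by (simp add: exp_add[symmetric] algebra_simps)
      have e4: "exp (- \<phi> v) * exp (\<phi> w) = exp (- (\<phi> v - \<phi> w))"
        by (simp add: exp_add[symmetric] algebra_simps)
      have e5: "t\<^sup>2 * (exp (\<phi> v - \<phi> w) + exp (- (\<phi> v - \<phi> w)) - 2)
         = 2 * (t\<^sup>2 * ((exp (\<phi> v - \<phi> w) + exp (- (\<phi> v - \<phi> w))) / 2 - 1))"
        by (simp add: algebra_simps)
      show "exp (t * \<phi> v) * exp (- t * \<phi> w) + exp (- t * \<phi> v) * exp (t * \<phi> w)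
        \<le> 2 + t\<^sup>2 * (exp (\<phi> v) * exp (- \<phi> w) + exp (- \<phi> v) * exp (\<phi> w) - 2)"
        unfolding e1 e2 e3 e4 e5 using H unfolding cosh_def by simp
    qed
    have L1: "(\<integral>w. exp (t * \<phi> v) * exp (- t * \<phi> w) + exp (- t * \<phi> v) * exp (t * \<phi> w) \<partial>M)
       = exp (t * \<phi> v) * m (- t) + exp (- t * \<phi> v) * m t" for v
      using ie[of "-t"] ie[of t] t by (simp add: m_def)
    have R1: "(\<integral>w. 2 + t\<^sup>2 * (exp (\<phi> v) * exp (- \<phi> w) + exp (- \<phi> v) * exp (\<phi> w) - 2) \<partial>M)
       = 2 + t\<^sup>2 * (exp (\<phi> v) * m (- 1) + exp (- \<phi> v) * m 1 - 2)" for v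
      using ie[of "-1"] ie[of 1] by (simp add: m_def prob_space)
    have "(\<integral>v. exp (t * \<phi> v) * m (- t) + exp (- t * \<phi> v) * m t \<partial>M)
       \<le> (\<integral>v. 2 + t\<^sup>2 * (exp (\<phi> v) * m (- 1) + exp (- \<phi> v) * m 1 - 2) \<partial>M)"
    proof (rule integral_mono)
      show "integrable M (\<lambda>v. exp (t * \<phi> v) * m (- t) + exp (- t * \<phi> v) * m t)"
        using ie[of "-t"] ie[of t] t by simp
      show "integrable M (\<lambda>v. 2 + t\<^sup>2 * (exp (\<phi> v) * m (- 1) + exp (- \<phi> v) * m 1 - 2))"
        using ie[of "-1"] ie[of 1] by simp
      fix v show "exp (t * \<phi> v) * m (- t) + exp (- t * \<phi> v) * m t
          \<le> 2 + t\<^sup>2 * (exp (\<phi> v) * m (- 1) + exp (- \<phi> v) * m 1 - 2)"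
        using inner[of v] unfolding L1 R1 .
    qed
    moreover have "(\<integral>v. exp (t * \<phi> v) * m (- t) + exp (- t * \<phi> v) * m t \<partial>M) = 2 * (m t * m (- t))"
      using ie[of "-t"] ie[of t] t by (simp add: m_def)
    moreover have "(\<integral>v. 2 + t\<^sup>2 * (exp (\<phi> v) * m (- 1) + exp (- \<phi> v) * m 1 - 2) \<partial>M)
        = 2 + t\<^sup>2 * (2 * (m 1 * m (-1)) - 2)"
      using ie[of "-1"] ie[of 1] by (simp add: m_def prob_space algebra_simps)
    moreover have "t\<^sup>2 * (2 * (m 1 * m (-1)) - 2) = 2 * (t\<^sup>2 * (m 1 * m (-1) - 1))"
      by (simp add: algebra_simps)
    ultimately show ?thesis by linarith
  qed
  have m1: "m 1 \<le> (\<integral>v. exp (U v) \<partial>M)" unfolding m_def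
    using ie[of 1] iU bnd by (intro integral_mono_AE) (auto intro!: AE_I2)
  have m2: "m (-1) \<le> (\<integral>v. exp (- L v) \<partial>M)" unfolding m_def
    using ie[of "-1"] iL bnd by (intro integral_mono_AE) (auto intro!: AE_I2)
  have "m 1 * m (-1) \<le> (\<integral>v. exp (U v) \<partial>M) * (\<integral>v. exp (- L v) \<partial>M)"
    using m1 m2 m_nonneg by (meson mult_mono order_trans)
  hence "t\<^sup>2 * (m 1 * m (-1) - 1) \<le> t\<^sup>2 * ((\<integral>v. exp (U v) \<partial>M) * (\<integral>v. exp (- L v) \<partial>M) - 1)"
    by (intro mult_left_mono) auto
  moreover have "m t * exp (- t * c) \<le> m t * m (- t)" using jensen m_nonneg by (intro mult_left_mono) auto
  moreover have "1 + t\<^sup>2 * ((\<integral>v. exp (U v) \<partial>M) * (\<integral>v. exp (- L v) \<partial>M) - 1)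
      \<le> exp (t\<^sup>2 * ((\<integral>v. exp (U v) \<partial>M) * (\<integral>v. exp (- L v) \<partial>M) - 1))"
    by (rule exp_ge_add_one_self)
  ultimately show "(\<integral>v. exp (t * (\<phi> v - (\<integral>w. \<phi> w \<partial>M))) \<partial>M)
          \<le> exp (t\<^sup>2 * ((\<integral>v. exp (U v) \<partial>M) * (\<integral>v. exp (- L v) \<partial>M) - 1))"
    using key I1 unfolding c_def by linarith
qed



context
  fixes \<mu> :: "'c measure" and L U :: "'c \<Rightarrow> real" and u0 :: 'c and K t :: real
  assumes mu: "prob_space \<mu>" and u0: "u0 \<in> space \<mu>"
   and iU: "integrable \<mu> (\<lambda>v. exp (U v))" and iL: "integrable \<mu> (\<lambda>v. exp (- L v))"
   and K: "(\<integral>v. exp (U v) \<partial>\<mu>) * (\<integral>v. exp (- L v) \<partial>\<mu>) - 1 \<le> K"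
   and t: "\<bar>t\<bar> \<le> 1"
begin

abbreviation PP :: "nat set \<Rightarrow> (nat \<Rightarrow> 'c) measure" where "PP I \<equiv> PiM I (\<lambda>_. \<mu>)"

definition QQ :: "nat set \<Rightarrow> ((nat \<Rightarrow> 'c) \<Rightarrow> real) \<Rightarrow> bool" where
  "QQ I F \<longleftrightarrow> (\<forall>k\<in>I. \<forall>x\<in>space (PP I). \<forall>v\<in>space \<mu>.
      L v \<le> F (x(k:=v)) - F (x(k:=u0)) \<and> F (x(k:=v)) - F (x(k:=u0)) \<le> U v)"

lemma mgf_bound:
  assumes "finite I"
  shows "\<forall>F. F \<in> borel_measurable (PP I) \<longrightarrow> QQ I F \<longrightarrow>
     integrable (PP I) F \<and>
     (\<integral>\<^sup>+ x. ennreal (exp (t * (F x - (\<integral>y. F y \<partial>PP I)))) \<partial>PP I) \<le> ennreal (exp (real (card I) * K * t\<^sup>2))"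
  using assms
proof (induction I rule: finite_induct)
  case empty
  show ?case
  proof (intro allI impI conjI)
    fix F :: "(nat \<Rightarrow> 'c) \<Rightarrow> real"
    show "integrable (PP {}) F" unfolding PiM_empty by (rule integrable_count_space) simp
    show "(\<integral>\<^sup>+ x. ennreal (exp (t * (F x - (\<integral>y. F y \<partial>PP {})))) \<partial>PP {}) \<le> ennreal (exp (real (card {}) * K * t\<^sup>2))"
      unfolding PiM_empty by (simp add: nn_integral_count_space_finite lebesgue_integral_count_space_finite)
  qed
next
  case (insert k J)
  interpret mu: prob_space \<mu> by (rule mu)
  interpret pp: product_prob_space "\<lambda>_::nat. \<mu>" "{}" 
    by (simp add: product_prob_space_def product_prob_space_axioms_def product_sigma_finite_def mu
        prob_space_imp_sigma_finite)
  interpret PJ: prob_space "PP J" by (rule prob_space_PiM) (rule mu)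
  show ?case
  proof (intro allI impI)
    fix F :: "(nat \<Rightarrow> 'c) \<Rightarrow> real"
    assume Fm[measurable]: "F \<in> borel_measurable (PP (insert k J))" and QF: "QQ (insert k J) F"
    have upd: "x(k:=v) \<in> space (PP (insert k J))" if "x \<in> space (PP J)" "v \<in> space \<mu>" for x v
      using that by (auto simp: space_PiM PiE_def extensional_def Pi_def)
    have mFx: "(\<lambda>v. F (x(k:=v))) \<in> borel_measurable \<mu>" if "x \<in> space (PP J)" for x
      using measurable_compose[OF measurable_component_update[OF that insert(2)] Fm] by simp
    have bnd: "L v \<le> F (x(k:=v)) - F (x(k:=u0)) \<and> F (x(k:=v)) - F (x(k:=u0)) \<le> U v"
      if "x \<in> space (PP J)" "v \<in> space \<mu>" for x v
      using QF upd[OF that(1) u0] that(2) unfolding QQ_def by (metis fun_upd_upd insertI1)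
    have mphi: "(\<lambda>v. F (x(k:=v)) - F (x(k:=u0))) \<in> borel_measurable \<mu>" if "x \<in> space (PP J)" for x
      using mFx[OF that] by simp
    define phi where "phi x v = F (x(k:=v)) - F (x(k:=u0))" for x v
    have sc: "integrable \<mu> (phi x)"
      "integrable \<mu> (\<lambda>v. exp (t * (phi x v - (\<integral>w. phi x w \<partial>\<mu>))))"
      "(\<integral>v. exp (t * (phi x v - (\<integral>w. phi x w \<partial>\<mu>))) \<partial>\<mu>)
          \<le> exp (t\<^sup>2 * ((\<integral>v. exp (U v) \<partial>\<mu>) * (\<integral>v. exp (- L v) \<partial>\<mu>) - 1))"
      if x: "x \<in> space (PP J)" for x
      using mu.single_coord[OF mphi[OF x] bnd[OF x] iU iL t] unfolding phi_def by auto
    define G where "G x = (\<integral>v. F (x(k:=v)) \<partial>\<mu>)" for x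
    define F' where "F' x = F (x(k:=u0))" for x
    have intF: "integrable \<mu> (\<lambda>v. F (x(k:=v)))" if x: "x \<in> space (PP J)" for x
    proof -
      have "integrable \<mu> (\<lambda>v. (F (x(k:=v)) - F (x(k:=u0))) + F (x(k:=u0)))"
        using sc(1)[OF x] x unfolding phi_def mFx[OF x] by (intro Bochner_Integration.integrable_add) auto
      thus ?thesis by simp
    qed
    have Gm[measurable]: "G \<in> borel_measurable (PP J)"
    proof -
      have "(\<lambda>(x,v). F (x(k:=v))) \<in> borel_measurable (PP J \<Otimes>\<^sub>M \<mu>)"
        using measurable_compose[OF measurable_add_dim Fm] by (simp add: case_prod_beta')
      then show ?thesis unfolding G_def
        using mu.borel_measurable_lebesgue_integral[of "\<lambda>x v. F (x(k:=v))" "PP J"] by simp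
    qed
    have F'm[measurable]: "F' \<in> borel_measurable (PP J)"
    proof -
      have "(\<lambda>x. (x, u0)) \<in> measurable (PP J) (PP J \<Otimes>\<^sub>M \<mu>)" using u0 by measurable
      from measurable_compose[OF measurable_compose[OF this measurable_add_dim] Fm]
      show ?thesis unfolding F'_def by simp
    qed
    have updJ: "x(j:=v) \<in> space (PP J)" if "x \<in> space (PP J)" "j \<in> J" "v \<in> space \<mu>" for x j v
      using that by (auto simp: space_PiM PiE_def extensional_def Pi_def)
    have QG: "QQ J G" unfolding QQ_def
    proof (intro ballI)
      fix j x v assume j: "j \<in> J" and x: "x \<in> space (PP J)" and v: "v \<in> space \<mu>"
      have kj: "k \<noteq> j" using j insert(2) by auto
      have eq: "G (x(j:=v)) - G (x(j:=u0)) = (\<integral>w. F (x(j:=v, k:=w)) - F (x(j:=u0, k:=w)) \<partial>\<mu>)"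
        unfolding G_def using intF[OF updJ[OF x j v]] intF[OF updJ[OF x j u0]]
        by (rule Bochner_Integration.integral_diff[symmetric])
      have pw: "L v \<le> F (x(j:=v, k:=w)) - F (x(j:=u0, k:=w)) \<and> F (x(j:=v, k:=w)) - F (x(j:=u0, k:=w)) \<le> U v"
        if w: "w \<in> space \<mu>" for w
      proof -
        have y: "x(k:=w) \<in> space (PP (insert k J))" by (rule upd[OF x w])
        have "x(j:=v, k:=w) = (x(k:=w))(j:=v)" "x(j:=u0, k:=w) = (x(k:=w))(j:=u0)"
          using kj by (auto simp: fun_upd_twist)
        thus ?thesis using QF y j v unfolding QQ_def by auto
      qed
      have iD: "integrable \<mu> (\<lambda>w. F (x(j:=v, k:=w)) - F (x(j:=u0, k:=w)))"
        using intF[OF updJ[OF x j v]] intF[OF updJ[OF x j u0]] by simp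
      have "(\<integral>w. L v \<partial>\<mu>) \<le> (\<integral>w. F (x(j:=v, k:=w)) - F (x(j:=u0, k:=w)) \<partial>\<mu>)"
        using pw iD by (intro integral_mono) auto
      moreover have "(\<integral>w. F (x(j:=v, k:=w)) - F (x(j:=u0, k:=w)) \<partial>\<mu>) \<le> (\<integral>w. U v \<partial>\<mu>)"
        using pw iD by (intro integral_mono) auto
      ultimately show "L v \<le> G (x(j:=v)) - G (x(j:=u0)) \<and> G (x(j:=v)) - G (x(j:=u0)) \<le> U v"
        unfolding eq by (simp add: mu.prob_space)
    qed
    have QF': "QQ J F'" unfolding QQ_def
    proof (intro ballI)
      fix j x v assume j: "j \<in> J" and x: "x \<in> space (PP J)" and v: "v \<in> space \<mu>"
      have kj: "k \<noteq> j" using j insert(2) by auto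
      have y: "x(k:=u0) \<in> space (PP (insert k J))" by (rule upd[OF x u0])
      have "x(j:=v, k:=u0) = (x(k:=u0))(j:=v)" "x(j:=u0, k:=u0) = (x(k:=u0))(j:=u0)"
        using kj by (auto simp: fun_upd_twist)
      thus "L v \<le> F' (x(j:=v)) - F' (x(j:=u0)) \<and> F' (x(j:=v)) - F' (x(j:=u0)) \<le> U v"
        using QF y j v unfolding QQ_def F'_def by auto
    qed
    from insert(3) Gm QG have IHG: "integrable (PP J) G"
      "(\<integral>\<^sup>+ x. ennreal (exp (t * (G x - (\<integral>y. G y \<partial>PP J)))) \<partial>PP J) \<le> ennreal (exp (real (card J) * K * t\<^sup>2))"
      by auto
    from insert(3) F'm QF' have IHF': "integrable (PP J) F'" by auto
    have phib: "\<bar>phi x v\<bar> \<le> exp (U v) + exp (- L v)" if x: "x \<in> space (PP J)" and v: "v \<in> space \<mu>" for x v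
    proof -
      have b: "L v \<le> phi x v" "phi x v \<le> U v" using bnd[OF x v] unfolding phi_def by auto
      have "\<bar>phi x v\<bar> \<le> exp \<bar>phi x v\<bar>" using exp_ge_add_one_self[of "\<bar>phi x v\<bar>"] by linarith
      also have "\<dots> \<le> exp (U v) + exp (- L v)" using b
        by (cases "phi x v \<ge> 0") (auto intro: add_increasing add_increasing2)
      finally show ?thesis .
    qed
    have intFP: "integrable (PP (insert k J)) F"
      unfolding integrable_iff_bounded
    proof (intro conjI)
      show "F \<in> borel_measurable (PP (insert k J))" by (rule Fm)
      have "(\<integral>\<^sup>+ y. ennreal (norm (F y)) \<partial>PP (insert k J))
          = (\<integral>\<^sup>+ x. \<integral>\<^sup>+ v. ennreal (norm (F (x(k:=v)))) \<partial>\<mu> \<partial>PP J)"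
        using insert(1,2) by (subst pp.product_nn_integral_insert) auto
      also have "\<dots> \<le> (\<integral>\<^sup>+ x. \<integral>\<^sup>+ v. ennreal \<bar>F' x\<bar> + ennreal (exp (U v) + exp (- L v)) \<partial>\<mu> \<partial>PP J)"
      proof (intro nn_integral_mono)
        fix x v assume x: "x \<in> space (PP J)" and v: "v \<in> space \<mu>"
        have "norm (F (x(k:=v))) \<le> \<bar>F' x\<bar> + (exp (U v) + exp (- L v))"
          using phib[OF x v] unfolding phi_def F'_def by simp
        thus "ennreal (norm (F (x(k:=v)))) \<le> ennreal \<bar>F' x\<bar> + ennreal (exp (U v) + exp (- L v))"
          by (simp add: ennreal_plus[symmetric] del: ennreal_plus)
      qed
      also have "\<dots> = (\<integral>\<^sup>+ x. ennreal \<bar>F' x\<bar> + (\<integral>\<^sup>+ v. ennreal (exp (U v) + exp (- L v)) \<partial>\<mu>) \<partial>PP J)"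
        using iU iL by (intro nn_integral_cong) (simp add: nn_integral_add mu.emeasure_space_1)
      also have "\<dots> = (\<integral>\<^sup>+ x. ennreal \<bar>F' x\<bar> \<partial>PP J) + (\<integral>\<^sup>+ v. ennreal (exp (U v) + exp (- L v)) \<partial>\<mu>)"
        by (simp add: nn_integral_add PJ.emeasure_space_1)
      also have "\<dots> < \<infinity>"
      proof -
        have "(\<integral>\<^sup>+ x. ennreal (norm (F' x)) \<partial>PP J) < \<infinity>" using IHF' unfolding integrable_iff_bounded by auto
        moreover have "integrable \<mu> (\<lambda>v. exp (U v) + exp (- L v))" using iU iL by simp
        hence "(\<integral>\<^sup>+ v. ennreal (norm (exp (U v) + exp (- L v))) \<partial>\<mu>) < \<infinity>" unfolding integrable_iff_bounded by auto
        ultimately show ?thesis by simp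
      qed
      finally show "(\<integral>\<^sup>+ y. ennreal (norm (F y)) \<partial>PP (insert k J)) < \<infinity>" .
    qed
    define c where "c = (\<integral>y. F y \<partial>PP (insert k J))"
    have cG: "c = (\<integral>x. G x \<partial>PP J)"
      unfolding c_def G_def using insert(1,2) intFP by (rule pp.product_integral_insert)
    have Kt: "exp (t\<^sup>2 * ((\<integral>v. exp (U v) \<partial>\<mu>) * (\<integral>v. exp (- L v) \<partial>\<mu>) - 1)) \<le> exp (K * t\<^sup>2)"
    proof -
      have "t\<^sup>2 * ((\<integral>v. exp (U v) \<partial>\<mu>) * (\<integral>v. exp (- L v) \<partial>\<mu>) - 1) \<le> t\<^sup>2 * K"
        using K by (intro mult_left_mono) auto
      thus ?thesis by (simp add: mult.commute)
    qed
    have inner: "(\<integral>\<^sup>+ v. ennreal (exp (t * (F (x(k:=v)) - c))) \<partial>\<mu>)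
        \<le> ennreal (exp (t * (G x - c))) * ennreal (exp (K * t\<^sup>2))" if x: "x \<in> space (PP J)" for x
    proof -
      have iphi: "(\<integral>w. phi x w \<partial>\<mu>) = G x - F (x(k:=u0))"
        unfolding phi_def G_def using intF[OF x]
        by (simp add: Bochner_Integration.integral_diff mu.prob_space)
      have "(\<integral>\<^sup>+ v. ennreal (exp (t * (F (x(k:=v)) - c))) \<partial>\<mu>)
          = (\<integral>\<^sup>+ v. ennreal (exp (t * (G x - c))) * ennreal (exp (t * (phi x v - (\<integral>w. phi x w \<partial>\<mu>)))) \<partial>\<mu>)"
      proof (intro nn_integral_cong)
        fix v
        have "t * (F (x(k:=v)) - c) = t * (G x - c) + t * (phi x v - (\<integral>w. phi x w \<partial>\<mu>))"
          using iphi unfolding phi_def by (simp add: algebra_simps)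
        thus "ennreal (exp (t * (F (x(k:=v)) - c))) = ennreal (exp (t * (G x - c))) * ennreal (exp (t * (phi x v - (\<integral>w. phi x w \<partial>\<mu>))))"
          by (simp add: exp_add ennreal_mult)
      qed
      also have "\<dots> = ennreal (exp (t * (G x - c))) * (\<integral>\<^sup>+ v. ennreal (exp (t * (phi x v - (\<integral>w. phi x w \<partial>\<mu>)))) \<partial>\<mu>)"
        using sc(2)[OF x] by (intro nn_integral_cmult) auto
      also have "\<dots> \<le> ennreal (exp (t * (G x - c))) * ennreal (exp (K * t\<^sup>2))"
      proof (rule mult_left_mono)
        have "(\<integral>\<^sup>+ v. ennreal (exp (t * (phi x v - (\<integral>w. phi x w \<partial>\<mu>)))) \<partial>\<mu>)
          = ennreal (\<integral>v. exp (t * (phi x v - (\<integral>w. phi x w \<partial>\<mu>))) \<partial>\<mu>)"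
          using sc(2)[OF x] by (intro nn_integral_eq_integral) auto
        also have "\<dots> \<le> ennreal (exp (K * t\<^sup>2))"
          using sc(3)[OF x] Kt by (intro ennreal_leI) linarith
        finally show "(\<integral>\<^sup>+ v. ennreal (exp (t * (phi x v - (\<integral>w. phi x w \<partial>\<mu>)))) \<partial>\<mu>) \<le> ennreal (exp (K * t\<^sup>2))" .
      qed simp
      finally show ?thesis .
    qed
    have "(\<integral>\<^sup>+ y. ennreal (exp (t * (F y - c))) \<partial>PP (insert k J))
        = (\<integral>\<^sup>+ x. \<integral>\<^sup>+ v. ennreal (exp (t * (F (x(k:=v)) - c))) \<partial>\<mu> \<partial>PP J)"
      using insert(1,2) by (subst pp.product_nn_integral_insert) auto
    also have "\<dots> \<le> (\<integral>\<^sup>+ x. ennreal (exp (t * (G x - c))) * ennreal (exp (K * t\<^sup>2)) \<partial>PP J)"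
      using inner by (intro nn_integral_mono) auto
    also have "\<dots> = (\<integral>\<^sup>+ x. ennreal (exp (t * (G x - c))) \<partial>PP J) * ennreal (exp (K * t\<^sup>2))"
      by (intro nn_integral_multc) auto
    also have "\<dots> \<le> ennreal (exp (real (card J) * K * t\<^sup>2)) * ennreal (exp (K * t\<^sup>2))"
      using IHG(2) unfolding cG by (intro mult_right_mono) auto
    also have "\<dots> = ennreal (exp (real (card (insert k J)) * K * t\<^sup>2))"
      using insert(1,2) by (simp add: ennreal_mult[symmetric] exp_add[symmetric] algebra_simps)
    finally have mgf: "(\<integral>\<^sup>+ x. ennreal (exp (t * (F x - (\<integral>y. F y \<partial>PP (insert k J))))) \<partial>PP (insert k J)) \<le> ennreal (exp (real (card (insert k J)) * K * t\<^sup>2))"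
      unfolding c_def .
    show "integrable (PP (insert k J)) F \<and> (\<integral>\<^sup>+ x. ennreal (exp (t * (F x - (\<integral>y. F y \<partial>PP (insert k J))))) \<partial>PP (insert k J)) \<le> ennreal (exp (real (card (insert k J)) * K * t\<^sup>2))"
      using intFP mgf by blast
  qed
qed

end


lemma (in prob_space) exp_markov:
  fixes g :: "'a \<Rightarrow> real"
  assumes g[measurable]: "g \<in> borel_measurable M" and t: "t \<ge> 0" and B: "B \<ge> 0"
    and mgf: "(\<integral>\<^sup>+x. ennreal (exp (t * g x)) \<partial>M) \<le> ennreal B"
  shows "measure M {x\<in>space M. g x > a} \<le> B * exp (- t * a)"
proof -
  define A where "A = {x\<in>space M. g x > a}"
  have A[measurable]: "A \<in> sets M" unfolding A_def by measurable
  have "ennreal (exp (t * a)) * emeasure M A = (\<integral>\<^sup>+x. ennreal (exp (t * a)) * indicator A x \<partial>M)"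
    by (simp add: nn_integral_cmult_indicator)
  also have "\<dots> \<le> (\<integral>\<^sup>+x. ennreal (exp (t * g x)) \<partial>M)"
  proof (intro nn_integral_mono)
    fix x assume x: "x \<in> space M"
    show "ennreal (exp (t * a)) * indicator A x \<le> ennreal (exp (t * g x))"
    proof (cases "x \<in> A")
      case True
      hence "t * a \<le> t * g x" using t unfolding A_def by (intro mult_left_mono) auto
      thus ?thesis using True by (simp add: ennreal_leI)
    qed simp
  qed
  also have "\<dots> \<le> ennreal B" by (rule mgf)
  finally have "ennreal (exp (t * a) * measure M A) \<le> ennreal B"
    by (simp add: emeasure_eq_measure ennreal_mult)
  hence "exp (t * a) * measure M A \<le> B" using B by (simp add: ennreal_le_iff)
  hence "measure M A \<le> B / exp (t * a)" by (simp add: field_simps)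
  thus ?thesis unfolding A_def by (simp add: exp_minus field_simps)
qed

lemma K_arith:
  fixes a b q A B :: real
  assumes "0 \<le> q" "q \<le> 1" "0 \<le> A" "0 \<le> B" "A \<le> a + q" "B \<le> b + (1 - q)"
  shows "A * B - 1 \<le> 2 * max a 1 * max b 1"
proof -
  define a' b' where "a' = max a 1" "b' = max b 1"
  have a': "a' \<ge> 1" "a \<le> a'" and b': "b' \<ge> 1" "b \<le> b'" unfolding a'_b'_def by auto
  have "A * B \<le> (a' + q) * (b' + (1 - q))"
    using assms a' b' by (intro mult_mono) auto
  also have "\<dots> = a' * b' + a' * (1 - q) + q * b' + q * (1 - q)" by (simp add: algebra_simps)
  also have "a' * (1 - q) + q * b' \<le> a' * b'"
  proof -
    have "a' * (1 - q) \<le> a' * b' * (1 - q)" using a' b' assms by (intro mult_right_mono) (auto simp: mult_le_cancel_left1)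
    moreover have "q * b' \<le> q * (a' * b')" using a' b' assms by (intro mult_left_mono) (auto simp: mult_le_cancel_right1)
    ultimately show ?thesis by (simp add: algebra_simps)
  qed
  moreover have "q * (1 - q) \<le> 1" using assms by (simp add: mult_le_one)
  ultimately show ?thesis unfolding a'_b'_def by linarith
qed



theorem theorem1p1:
  fixes M :: "'a measure" and T :: "nat \<Rightarrow> 'a \<Rightarrow> nat"
    and N :: "'b measure" and \<eta> :: "nat \<Rightarrow> 'b \<Rightarrow> real"
    and \<beta> h :: real and n :: nat
  assumes M: "prob_space M"
    and T_indep: "prob_space.indep_vars M (\<lambda>_. count_space UNIV) T UNIV"
    and T_ident: "\<And>i. distr M (count_space UNIV) (T i) = distr M (count_space UNIV) (T 0)"
    and T_pos: "\<And>i \<omega>. \<omega> \<in> space M \<Longrightarrow> T i \<omega> > 0"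
    and N: "prob_space N"
    and eta_indep: "prob_space.indep_vars N (\<lambda>_. borel) \<eta> UNIV"
    and eta_ident: "\<And>k. distr N borel (\<eta> k) = distr N borel (\<eta> 0)"
    and beta: "\<beta> > 0"
    and expmom: "integrable N (\<lambda>x. exp (\<beta> * \<bar>\<eta> 0 x\<bar>))"
    and n: "n \<ge> 1"
    and hit: "measure M {\<omega> \<in> space M. \<exists>j. renewal_tau T j \<omega> = n} > 0"
  defines "K \<equiv> 2 * max (exp (h + ln (\<integral>x. exp (\<beta> * \<eta> 0 x) \<partial>N))) 1
                 * max (exp (- h + ln (\<integral>x. exp ((- \<beta>) * \<eta> 0 x) \<partial>N))) 1"
    and "Z \<equiv> pinning_Z M T \<eta> \<beta> h n"
  shows "integrable N (\<lambda>x. ln (Z x))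
    \<and> (\<forall>\<sigma>\<in>{1, -1::real}.
        (\<forall>t\<in>{0..1::real}.
           (\<integral>\<^sup>+ x. ennreal (exp (\<sigma> * t * (ln (Z x) - (\<integral>y. ln (Z y) \<partial>N)))) \<partial>N)
             \<le> ennreal (exp (real n * K * t\<^sup>2)))
      \<and> (\<forall>y::real. 0 < y \<and> y \<le> 2 * K \<longrightarrow>
           measure N {x \<in> space N. \<sigma> * (1 / real n) * (ln (Z x) - (\<integral>y. ln (Z y) \<partial>N)) > y}
             \<le> exp (- real n * y\<^sup>2 / (4 * K)))
      \<and> (\<forall>y::real. 2 * K < y \<longrightarrow>
           measure N {x \<in> space N. \<sigma> * (1 / real n) * (ln (Z x) - (\<integral>y. ln (Z y) \<partial>N)) > y}
             \<le> exp (- real n * (y - K))))"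
proof -
  interpret M: prob_space M by (rule M)
  interpret N: prob_space N by (rule N)
  define I where "I = {1..n}"
  have cardI: "card I = n" unfolding I_def by simp
  have Tm[measurable]: "T i \<in> measurable M (count_space UNIV)" for i
    using T_indep unfolding M.indep_vars_def by auto
  have etam[measurable]: "\<eta> k \<in> borel_measurable N" for k
    using eta_indep unfolding N.indep_vars_def by auto
  define \<mu> where "\<mu> = distr N borel (\<eta> 0)"
  have mu: "prob_space \<mu>" unfolding \<mu>_def by (rule N.prob_space_distr) simp
  interpret mu: prob_space \<mu> by (rule mu)
  have space_mu: "space \<mu> = UNIV" and sets_mu: "sets \<mu> = sets borel" unfolding \<mu>_def by auto
  define \<delta> where "\<delta> = renewal_delta T"
  have Trm[measurable]: "(\<lambda>\<omega>. real (T i \<omega>)) \<in> borel_measurable M" for i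
    using measurable_compose[OF Tm[of i] measurable_count_space[of real]] by simp
  have deltam[measurable]: "\<delta> k \<in> borel_measurable M" for k
  proof -
    have eq: "\<delta> k = (\<lambda>\<omega>. if \<exists>j. (\<Sum>i<j. real (T i \<omega>)) = real k then 1 else 0)"
      unfolding \<delta>_def renewal_delta_def renewal_tau_def by (intro ext) (simp flip: of_nat_sum)
    show ?thesis unfolding eq by measurable
  qed
  have delta01: "\<delta> k \<omega> = 0 \<or> \<delta> k \<omega> = 1" for k \<omega> unfolding \<delta>_def renewal_delta_def by auto
  define Fz where "Fz y = (\<integral>\<omega>. exp (\<Sum>k=1..n. (\<beta> * y k + h) * \<delta> k \<omega>) * \<delta> n \<omega> \<partial>M)" for y :: "nat \<Rightarrow> real"
  define X where "X x = (\<lambda>k\<in>I. \<eta> k x)" for x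
  have ZX: "Z x = Fz (X x)" for x
    unfolding Z_def pinning_Z_def Fz_def X_def \<delta>_def I_def by (intro Bochner_Integration.integral_cong refl) auto
  define g where "g y \<omega> = exp (\<Sum>k=1..n. (\<beta> * y k + h) * \<delta> k \<omega>) * \<delta> n \<omega>" for y :: "nat \<Rightarrow> real" and \<omega>
  have Fz_g: "Fz y = (\<integral>\<omega>. g y \<omega> \<partial>M)" for y unfolding Fz_def g_def ..
  have gm[measurable]: "g y \<in> borel_measurable M" for y unfolding g_def by measurable
  define C where "C y = (\<Sum>k=1..n. \<bar>\<beta> * y k + h\<bar>)" for y :: "nat \<Rightarrow> real"
  have Sb: "\<bar>\<Sum>k=1..n. (\<beta> * y k + h) * \<delta> k \<omega>\<bar> \<le> C y" for y \<omega>
  proof -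
    have "\<bar>\<Sum>k=1..n. (\<beta> * y k + h) * \<delta> k \<omega>\<bar> \<le> (\<Sum>k=1..n. \<bar>(\<beta> * y k + h) * \<delta> k \<omega>\<bar>)"
      by (rule sum_abs)
    also have "\<dots> \<le> C y" unfolding C_def
    proof (rule sum_mono)
      fix k show "\<bar>(\<beta> * y k + h) * \<delta> k \<omega>\<bar> \<le> \<bar>\<beta> * y k + h\<bar>"
        using delta01[of k \<omega>] by auto
    qed
    finally show ?thesis .
  qed
  have g_nonneg: "0 \<le> g y \<omega>" for y \<omega> unfolding g_def using delta01[of n \<omega>] by auto
  have g_le: "g y \<omega> \<le> exp (C y)" for y \<omega>
  proof -
    have "g y \<omega> \<le> exp (\<Sum>k=1..n. (\<beta> * y k + h) * \<delta> k \<omega>)" unfolding g_def using delta01[of n \<omega>] by auto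
    also have "\<dots> \<le> exp (C y)" using Sb[of y \<omega>] by simp
    finally show ?thesis .
  qed
  have g_int: "integrable M (g y)" for y
    using g_nonneg g_le by (intro M.integrable_const_bound[where B="exp (C y)"]) auto
  define H where "H = {\<omega> \<in> space M. \<exists>j. renewal_tau T j \<omega> = n}"
  have deltan: "\<delta> n \<omega> = indicator H \<omega>" if "\<omega> \<in> space M" for \<omega>
    using that unfolding \<delta>_def renewal_delta_def H_def by auto
  have Hm: "H \<in> sets M"
  proof -
    have "H = {\<omega> \<in> space M. \<delta> n \<omega> = 1}" unfolding H_def \<delta>_def renewal_delta_def by auto
    also have "\<dots> \<in> sets M" by measurable
    finally show ?thesis .
  qed
  have Fz_pos: "Fz y > 0" for y
  proof -
    have "(\<integral>\<omega>. exp (- C y) * indicator H \<omega> \<partial>M) \<le> (\<integral>\<omega>. g y \<omega> \<partial>M)"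
    proof (intro integral_mono g_int)
      show "integrable M (\<lambda>\<omega>. exp (- C y) * indicator H \<omega>)" using Hm
        by (intro integrable_mult_right integrable_real_indicator) (auto simp: M.emeasure_finite less_top[symmetric])
      fix \<omega> assume w: "\<omega> \<in> space M"
      have "- C y \<le> (\<Sum>k=1..n. (\<beta> * y k + h) * \<delta> k \<omega>)" using Sb[of y \<omega>] by linarith
      hence "exp (- C y) \<le> exp (\<Sum>k=1..n. (\<beta> * y k + h) * \<delta> k \<omega>)" by simp
      thus "exp (- C y) * indicator H \<omega> \<le> g y \<omega>" unfolding g_def deltan[OF w]
        by (auto simp: indicator_def)
    qed
    moreover have "(\<integral>\<omega>. exp (- C y) * indicator H \<omega> \<partial>M) = exp (- C y) * measure M H"
      using Hm by simp
    moreover have "measure M H > 0" using hit unfolding H_def .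
    ultimately show ?thesis unfolding Fz_g by (smt (verit) exp_gt_zero mult_pos_pos)
  qed
  define u0 where "u0 = - h / \<beta>"
  define L where "L v = min (\<beta> * v + h) 0" for v :: real
  define U where "U v = max (\<beta> * v + h) 0" for v :: real
  have u0z: "\<beta> * u0 + h = 0" unfolding u0_def using beta by simp
  have sum_split: "(\<Sum>j=1..n. (\<beta> * (y(k:=w)) j + h) * \<delta> j \<omega>)
      = (\<beta> * w + h) * \<delta> k \<omega> + (\<Sum>j\<in>I-{k}. (\<beta> * y j + h) * \<delta> j \<omega>)" if k: "k \<in> I" for y k w \<omega>
  proof -
    have "(\<Sum>j=1..n. (\<beta> * (y(k:=w)) j + h) * \<delta> j \<omega>) = (\<Sum>j\<in>I. (\<beta> * (y(k:=w)) j + h) * \<delta> j \<omega>)"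
      unfolding I_def ..
    also have "\<dots> = (\<beta> * (y(k:=w)) k + h) * \<delta> k \<omega> + (\<Sum>j\<in>I-{k}. (\<beta> * (y(k:=w)) j + h) * \<delta> j \<omega>)"
      using k unfolding I_def by (intro sum.remove) auto
    also have "(\<Sum>j\<in>I-{k}. (\<beta> * (y(k:=w)) j + h) * \<delta> j \<omega>) = (\<Sum>j\<in>I-{k}. (\<beta> * y j + h) * \<delta> j \<omega>)"
      by (intro sum.cong) auto
    finally show ?thesis by simp
  qed
  have g_upd: "g (y(k:=v)) \<omega> = exp ((\<beta> * v + h) * \<delta> k \<omega>) * g (y(k:=u0)) \<omega>" if k: "k \<in> I" for y k v \<omega>
    unfolding g_def sum_split[OF k] u0z by (simp add: exp_add)
  have Fz_bnd: "exp (L v) * Fz (y(k:=u0)) \<le> Fz (y(k:=v)) \<and> Fz (y(k:=v)) \<le> exp (U v) * Fz (y(k:=u0))"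
    if k: "k \<in> I" for y k v
  proof -
    have pw: "exp (L v) * g (y(k:=u0)) \<omega> \<le> g (y(k:=v)) \<omega> \<and> g (y(k:=v)) \<omega> \<le> exp (U v) * g (y(k:=u0)) \<omega>" for \<omega>
    proof -
      have "exp (L v) \<le> exp ((\<beta> * v + h) * \<delta> k \<omega>) \<and> exp ((\<beta> * v + h) * \<delta> k \<omega>) \<le> exp (U v)"
        using delta01[of k \<omega>] unfolding L_def U_def by auto
      moreover have gu: "g (y(k:=v)) \<omega> = exp ((\<beta> * v + h) * \<delta> k \<omega>) * g (y(k:=u0)) \<omega>" by (rule g_upd[OF k])
      ultimately show ?thesis unfolding gu using g_nonneg[of "y(k:=u0)" \<omega>] by (auto intro: mult_right_mono)
    qed
    have "(\<integral>\<omega>. exp (L v) * g (y(k:=u0)) \<omega> \<partial>M) \<le> Fz (y(k:=v))"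
      unfolding Fz_g using pw g_int by (intro integral_mono) auto
    moreover have "Fz (y(k:=v)) \<le> (\<integral>\<omega>. exp (U v) * g (y(k:=u0)) \<omega> \<partial>M)"
      unfolding Fz_g using pw g_int by (intro integral_mono) auto
    ultimately show ?thesis unfolding Fz_g by simp
  qed
  have lnQ: "L v \<le> ln (Fz (y(k:=v))) - ln (Fz (y(k:=u0))) \<and> ln (Fz (y(k:=v))) - ln (Fz (y(k:=u0))) \<le> U v"
    if k: "k \<in> I" for y k v
  proof -
    have p0: "Fz (y(k:=u0)) > 0" "Fz (y(k:=v)) > 0" by (rule Fz_pos)+
    have fb: "exp (L v) * Fz (y(k:=u0)) \<le> Fz (y(k:=v)) \<and> Fz (y(k:=v)) \<le> exp (U v) * Fz (y(k:=u0))"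
      by (rule Fz_bnd[OF k])
    have "ln (exp (L v) * Fz (y(k:=u0))) \<le> ln (Fz (y(k:=v)))"
      using fb p0 by (subst ln_le_cancel_iff) auto
    moreover have "ln (Fz (y(k:=v))) \<le> ln (exp (U v) * Fz (y(k:=u0)))"
      using fb p0 by (subst ln_le_cancel_iff) auto
    ultimately show ?thesis using p0 by (simp add: ln_mult)
  qed
  have bd: "exp (U u) \<le> exp \<bar>h\<bar> * exp (\<beta> * \<bar>u\<bar>)" "exp (- L u) \<le> exp \<bar>h\<bar> * exp (\<beta> * \<bar>u\<bar>)"
    "exp (\<beta> * u + h) \<le> exp \<bar>h\<bar> * exp (\<beta> * \<bar>u\<bar>)" "exp (- (\<beta> * u + h)) \<le> exp \<bar>h\<bar> * exp (\<beta> * \<bar>u\<bar>)" for u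
  proof -
    have a1: "\<beta> * u \<le> \<beta> * \<bar>u\<bar>" using beta by (intro mult_left_mono) auto
    have "\<beta> * (- u) \<le> \<beta> * \<bar>u\<bar>" using beta by (intro mult_left_mono) auto
    hence a: "\<beta> * u \<le> \<beta> * \<bar>u\<bar>" "- (\<beta> * u) \<le> \<beta> * \<bar>u\<bar>" using a1 by auto
    have b: "U u \<le> \<bar>h\<bar> + \<beta> * \<bar>u\<bar>" "- L u \<le> \<bar>h\<bar> + \<beta> * \<bar>u\<bar>"
      "\<beta> * u + h \<le> \<bar>h\<bar> + \<beta> * \<bar>u\<bar>" "- (\<beta> * u + h) \<le> \<bar>h\<bar> + \<beta> * \<bar>u\<bar>"
    proof -
      have c: "0 \<le> \<beta> * \<bar>u\<bar>" "h \<le> \<bar>h\<bar>" "- h \<le> \<bar>h\<bar>" "0 \<le> \<bar>h\<bar>" using beta by auto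
      show "U u \<le> \<bar>h\<bar> + \<beta> * \<bar>u\<bar>" unfolding U_def using a c by (intro max.boundedI) linarith+
      show "- L u \<le> \<bar>h\<bar> + \<beta> * \<bar>u\<bar>" unfolding L_def using a c by (cases "\<beta> * u + h \<le> 0") (simp_all add: min_def)
      show "\<beta> * u + h \<le> \<bar>h\<bar> + \<beta> * \<bar>u\<bar>" using a c by linarith
      show "- (\<beta> * u + h) \<le> \<bar>h\<bar> + \<beta> * \<bar>u\<bar>" using a c by linarith
    qed
    show "exp (U u) \<le> exp \<bar>h\<bar> * exp (\<beta> * \<bar>u\<bar>)" "exp (- L u) \<le> exp \<bar>h\<bar> * exp (\<beta> * \<bar>u\<bar>)"
      "exp (\<beta> * u + h) \<le> exp \<bar>h\<bar> * exp (\<beta> * \<bar>u\<bar>)" "exp (- (\<beta> * u + h)) \<le> exp \<bar>h\<bar> * exp (\<beta> * \<bar>u\<bar>)"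
      using b by (simp_all add: exp_add[symmetric])
  qed
  have gint: "integrable N (\<lambda>x. exp \<bar>h\<bar> * exp (\<beta> * \<bar>\<eta> 0 x\<bar>))" using expmom by simp
  have intN: "integrable N (\<lambda>x. f (\<eta> 0 x))" if fm: "f \<in> borel_measurable borel"
    and fb: "\<And>u. \<bar>f u\<bar> \<le> exp \<bar>h\<bar> * exp (\<beta> * \<bar>u\<bar>)" for f :: "real \<Rightarrow> real"
  proof (rule Bochner_Integration.integrable_bound[OF gint])
    show "(\<lambda>x. f (\<eta> 0 x)) \<in> borel_measurable N" using measurable_compose[OF etam fm] by simp
    show "AE x in N. norm (f (\<eta> 0 x)) \<le> norm (exp \<bar>h\<bar> * exp (\<beta> * \<bar>\<eta> 0 x\<bar>))"
      using fb by auto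
  qed
  have Um[measurable]: "U \<in> borel_measurable borel" and Lm[measurable]: "L \<in> borel_measurable borel"
    unfolding U_def[abs_def] L_def[abs_def] by measurable
  have iUN: "integrable N (\<lambda>x. exp (U (\<eta> 0 x)))"
    by (rule intN[of "\<lambda>u. exp (U u)"]) (simp, simp only: abs_exp_cancel bd(1))
  have iLN: "integrable N (\<lambda>x. exp (- L (\<eta> 0 x)))"
    by (rule intN[of "\<lambda>u. exp (- L u)"]) (simp, simp only: abs_exp_cancel bd(2))
  have iU: "integrable \<mu> (\<lambda>v. exp (U v))" unfolding \<mu>_def using iUN by (subst integrable_distr_eq) auto
  have iL: "integrable \<mu> (\<lambda>v. exp (- L v))" unfolding \<mu>_def using iLN by (subst integrable_distr_eq) auto
  have Kb: "(\<integral>v. exp (U v) \<partial>\<mu>) * (\<integral>v. exp (- L v) \<partial>\<mu>) - 1 \<le> K"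
  proof -
    have eh: "1 \<le> exp \<bar>h\<bar>" by simp
    have ebu: "exp (\<beta> * \<bar>u\<bar>) \<le> exp \<bar>h\<bar> * exp (\<beta> * \<bar>u\<bar>)" for u
      using mult_right_mono[OF eh, of "exp (\<beta> * \<bar>u\<bar>)"] by simp
    have sb: "\<beta> * u \<le> \<beta> * \<bar>u\<bar>" "(- \<beta>) * u \<le> \<beta> * \<bar>u\<bar>" for u
    proof -
      show "\<beta> * u \<le> \<beta> * \<bar>u\<bar>" using beta by (intro mult_left_mono) auto
      have "\<beta> * (- u) \<le> \<beta> * \<bar>u\<bar>" using beta by (intro mult_left_mono) auto
      thus "(- \<beta>) * u \<le> \<beta> * \<bar>u\<bar>" by simp
    qed
    define EP where "EP = (\<integral>x. exp (\<beta> * \<eta> 0 x) \<partial>N)"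
    define EM where "EM = (\<integral>x. exp ((- \<beta>) * \<eta> 0 x) \<partial>N)"
    have iEP: "integrable N (\<lambda>x. exp (\<beta> * \<eta> 0 x))"
    proof (rule intN[of "\<lambda>u. exp (\<beta> * u)"])
      fix u show "\<bar>exp (\<beta> * u)\<bar> \<le> exp \<bar>h\<bar> * exp (\<beta> * \<bar>u\<bar>)"
      proof -
        have "exp (\<beta> * u) \<le> exp (\<beta> * \<bar>u\<bar>)" using sb(1)[of u] by (simp only: exp_le_cancel_iff)
        thus ?thesis unfolding abs_exp_cancel using ebu[of u] by linarith
      qed
    qed simp
    have iEM: "integrable N (\<lambda>x. exp ((- \<beta>) * \<eta> 0 x))"
    proof (rule intN[of "\<lambda>u. exp ((- \<beta>) * u)"])
      fix u show "\<bar>exp ((- \<beta>) * u)\<bar> \<le> exp \<bar>h\<bar> * exp (\<beta> * \<bar>u\<bar>)"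
      proof -
        have "exp ((- \<beta>) * u) \<le> exp (\<beta> * \<bar>u\<bar>)" using sb(2)[of u] by (simp only: exp_le_cancel_iff)
        thus ?thesis unfolding abs_exp_cancel using ebu[of u] by linarith
      qed
    qed simp
    have pos: "0 < (\<integral>x. f x \<partial>N)" if "integrable N f" "\<And>x. f x > 0" for f :: "'b \<Rightarrow> real"
    proof -
      have "0 \<le> (\<integral>x. f x \<partial>N)" by (intro integral_nonneg_AE AE_I2 less_imp_le that(2))
      moreover have "(\<integral>x. f x \<partial>N) \<noteq> 0"
      proof
        assume "(\<integral>x. f x \<partial>N) = 0"
        moreover have nn: "AE x in N. 0 \<le> f x" by (intro AE_I2 less_imp_le that(2))
        ultimately have "AE x in N. f x = 0" using integral_nonneg_eq_0_iff_AE[OF that(1) nn] by simp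
        hence "AE x in N. False"
        proof (eventually_elim)
          fix x assume "f x = 0" thus False using that(2)[of x] by simp
        qed
        thus False by simp
      qed
      ultimately show ?thesis by simp
    qed
    have EPp: "EP > 0" unfolding EP_def using iEP by (intro pos) auto
    have EMp: "EM > 0" unfolding EM_def using iEM by (intro pos) auto
    define a where "a = exp (h + ln EP)"
    define b where "b = exp (- h + ln EM)"
    have a_eq: "(\<integral>x. exp (\<beta> * \<eta> 0 x + h) \<partial>N) = a"
    proof -
      have "(\<integral>x. exp (\<beta> * \<eta> 0 x + h) \<partial>N) = (\<integral>x. exp h * exp (\<beta> * \<eta> 0 x) \<partial>N)"
        by (simp add: exp_add mult.commute)
      also have "\<dots> = exp h * EP" unfolding EP_def by simp
      also have "\<dots> = a" unfolding a_def using EPp by (simp only: exp_add exp_ln)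
      finally show ?thesis .
    qed
    have b_eq: "(\<integral>x. exp (- (\<beta> * \<eta> 0 x + h)) \<partial>N) = b"
    proof -
      have "(\<integral>x. exp (- (\<beta> * \<eta> 0 x + h)) \<partial>N) = (\<integral>x. exp (- h) * exp ((- \<beta>) * \<eta> 0 x) \<partial>N)"
      proof (intro Bochner_Integration.integral_cong refl)
        fix x
        have "- (\<beta> * \<eta> 0 x + h) = - h + (- \<beta>) * \<eta> 0 x" by simp
        thus "exp (- (\<beta> * \<eta> 0 x + h)) = exp (- h) * exp ((- \<beta>) * \<eta> 0 x)" by (simp only: exp_add)
      qed
      also have "\<dots> = exp (- h) * EM" unfolding EM_def by simp
      also have "\<dots> = b" unfolding b_def using EMp by (simp only: exp_add exp_ln)
      finally show ?thesis .
    qed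
    have iA: "integrable N (\<lambda>x. exp (\<beta> * \<eta> 0 x + h))" by (rule intN[of "\<lambda>u. exp (\<beta> * u + h)"]) (simp, simp only: abs_exp_cancel bd(3))
    have iB: "integrable N (\<lambda>x. exp (- (\<beta> * \<eta> 0 x + h)))" by (rule intN[of "\<lambda>u. exp (- (\<beta> * u + h))"]) (simp, simp only: abs_exp_cancel bd(4))
    define ind where "ind u = (if \<beta> * u + h < 0 then 1 else (0::real))" for u
    have indm[measurable]: "ind \<in> borel_measurable borel" unfolding ind_def[abs_def] by measurable
    have iind: "integrable N (\<lambda>x. ind (\<eta> 0 x))"
      by (rule N.integrable_const_bound[where B=1]) (auto simp: ind_def)
    define q where "q = (\<integral>x. ind (\<eta> 0 x) \<partial>N)"
    have q01: "0 \<le> q" "q \<le> 1" unfolding q_def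
    proof -
      show "0 \<le> (\<integral>x. ind (\<eta> 0 x) \<partial>N)" by (intro integral_nonneg_AE) (auto simp: ind_def)
      have "(\<integral>x. ind (\<eta> 0 x) \<partial>N) \<le> (\<integral>x. 1 \<partial>N)" using iind by (intro integral_mono) (auto simp: ind_def)
      thus "(\<integral>x. ind (\<eta> 0 x) \<partial>N) \<le> 1" by (simp add: N.prob_space)
    qed
    have A_eq: "(\<integral>v. exp (U v) \<partial>\<mu>) = (\<integral>x. exp (U (\<eta> 0 x)) \<partial>N)"
      unfolding \<mu>_def by (subst integral_distr) auto
    have B_eq: "(\<integral>v. exp (- L v) \<partial>\<mu>) = (\<integral>x. exp (- L (\<eta> 0 x)) \<partial>N)"
      unfolding \<mu>_def by (subst integral_distr) auto
    have A_le: "(\<integral>x. exp (U (\<eta> 0 x)) \<partial>N) \<le> a + q"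
    proof -
      have "(\<integral>x. exp (U (\<eta> 0 x)) \<partial>N) \<le> (\<integral>x. exp (\<beta> * \<eta> 0 x + h) + ind (\<eta> 0 x) \<partial>N)"
      proof (rule integral_mono[OF iUN])
        show "integrable N (\<lambda>x. exp (\<beta> * \<eta> 0 x + h) + ind (\<eta> 0 x))" using iA iind by simp
        fix x
        show "exp (U (\<eta> 0 x)) \<le> exp (\<beta> * \<eta> 0 x + h) + ind (\<eta> 0 x)"
        proof (cases "\<beta> * \<eta> 0 x + h < 0")
          case True thus ?thesis unfolding U_def ind_def by (simp add: max_def)
        next
          case False thus ?thesis unfolding U_def ind_def by (simp add: max_def)
        qed
      qed
      also have "\<dots> = a + q" using iA iind a_eq unfolding q_def by simp
      finally show ?thesis .
    qed
    have B_le: "(\<integral>x. exp (- L (\<eta> 0 x)) \<partial>N) \<le> b + (1 - q)"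
    proof -
      have "(\<integral>x. exp (- L (\<eta> 0 x)) \<partial>N) \<le> (\<integral>x. exp (- (\<beta> * \<eta> 0 x + h)) + (1 - ind (\<eta> 0 x)) \<partial>N)"
      proof (rule integral_mono[OF iLN])
        show "integrable N (\<lambda>x. exp (- (\<beta> * \<eta> 0 x + h)) + (1 - ind (\<eta> 0 x)))" using iB iind by simp
        fix x
        show "exp (- L (\<eta> 0 x)) \<le> exp (- (\<beta> * \<eta> 0 x + h)) + (1 - ind (\<eta> 0 x))"
        proof (cases "\<beta> * \<eta> 0 x + h < 0")
          case True thus ?thesis unfolding L_def ind_def by (simp add: min_def)
        next
          case False thus ?thesis unfolding L_def ind_def by (simp add: min_def)
        qed
      qed
      also have "\<dots> = b + (1 - q)" using iB iind b_eq unfolding q_def by (simp add: N.prob_space)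
      finally show ?thesis .
    qed
    have "(\<integral>v. exp (U v) \<partial>\<mu>) * (\<integral>v. exp (- L v) \<partial>\<mu>) - 1 \<le> 2 * max a 1 * max b 1"
    proof -
      have A0: "0 \<le> (\<integral>x. exp (U (\<eta> 0 x)) \<partial>N)" by (intro integral_nonneg_AE AE_I2) simp
      have B0: "0 \<le> (\<integral>x. exp (- L (\<eta> 0 x)) \<partial>N)" by (intro integral_nonneg_AE AE_I2) simp
      show ?thesis unfolding A_eq B_eq by (rule K_arith[OF q01 A0 B0 A_le B_le])
    qed
    thus ?thesis unfolding K_def a_def b_def EP_def EM_def .
  qed
  have Kpos: "K \<ge> 2" unfolding K_def
  proof -
    have "1 \<le> max (exp (h + ln (\<integral>x. exp (\<beta> * \<eta> 0 x) \<partial>N))) 1 * max (exp (- h + ln (\<integral>x. exp ((- \<beta>) * \<eta> 0 x) \<partial>N))) 1"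
      using mult_mono[of 1 "max (exp (h + ln (\<integral>x. exp (\<beta> * \<eta> 0 x) \<partial>N))) 1" 1 "max (exp (- h + ln (\<integral>x. exp ((- \<beta>) * \<eta> 0 x) \<partial>N))) 1"] by simp
    thus "2 \<le> 2 * max (exp (h + ln (\<integral>x. exp (\<beta> * \<eta> 0 x) \<partial>N))) 1 * max (exp (- h + ln (\<integral>x. exp ((- \<beta>) * \<eta> 0 x) \<partial>N))) 1"
      by linarith
  qed
  have Inz: "I \<noteq> {}" "finite I" using n unfolding I_def by auto
  have sPP: "sets (PiM I (\<lambda>_. \<mu>)) = sets (PiM I (\<lambda>_. borel :: real measure))"
    by (rule sets_PiM_cong) (auto simp: sets_mu)
  have comp[measurable]: "(\<lambda>y. y k) \<in> borel_measurable (PiM I (\<lambda>_. \<mu>))" for k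
  proof (cases "k \<in> I")
    case True
    have "(\<lambda>y. y k) \<in> measurable (PiM I (\<lambda>_. \<mu>)) \<mu>" by (rule measurable_component_singleton[OF True])
    thus ?thesis by (simp add: measurable_cong_sets[OF refl sets_mu])
  next
    case False
    have "\<forall>y\<in>space (PiM I (\<lambda>_. \<mu>)). y k = undefined" using False by (auto simp: space_PiM PiE_def extensional_def)
    then show ?thesis by (subst measurable_cong[where g = "\<lambda>_. undefined"]) auto
  qed
  have Fzm: "Fz \<in> borel_measurable (PiM I (\<lambda>_. \<mu>))"
  proof -
    have "(\<lambda>(y, \<omega>). g y \<omega>) \<in> borel_measurable (PiM I (\<lambda>_. \<mu>) \<Otimes>\<^sub>M M)" unfolding g_def by measurable
    hence "(\<lambda>y. \<integral>\<omega>. g y \<omega> \<partial>M) \<in> borel_measurable (PiM I (\<lambda>_. \<mu>))"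
      by (rule M.borel_measurable_lebesgue_integral)
    thus ?thesis unfolding Fz_g .
  qed
  define F where "F y = ln (Fz y)" for y
  have Fm[measurable]: "F \<in> borel_measurable (PiM I (\<lambda>_. \<mu>))" unfolding F_def[abs_def] using Fzm by measurable
  have u0s: "u0 \<in> space \<mu>" using space_mu by simp
  have t0: "\<bar>0::real\<bar> \<le> 1" by simp
  have QF: "QQ \<mu> L U u0 I F"
    unfolding QQ_def[OF mu u0s iU iL Kb t0] using lnQ space_mu unfolding F_def by blast
  have Xm: "X \<in> measurable N (PiM I (\<lambda>_. borel))" unfolding X_def by measurable
  have distrX: "distr N (PiM I (\<lambda>_. borel)) X = PiM I (\<lambda>_. \<mu>)"
  proof -
    have ind: "N.indep_vars (\<lambda>_. borel) \<eta> I" by (rule N.indep_vars_subset[OF eta_indep]) auto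
    have "distr N (PiM I (\<lambda>_. borel)) (\<lambda>x. \<lambda>i\<in>I. \<eta> i x) = PiM I (\<lambda>i. distr N borel (\<eta> i))"
      using N.indep_vars_iff_distr_eq_PiM'[of I \<eta> "\<lambda>_. borel"] Inz ind by simp
    also have "\<dots> = PiM I (\<lambda>_. \<mu>)" unfolding \<mu>_def by (rule PiM_cong[OF refl eta_ident])
    finally show ?thesis unfolding X_def .
  qed
  have FmB[measurable]: "F \<in> borel_measurable (PiM I (\<lambda>_. borel))"
    using Fm by (simp add: measurable_cong_sets[OF sPP refl])
  have ZF: "ln (Z x) = F (X x)" for x by (simp add: ZX F_def)
  have intF_eq: "integrable N (\<lambda>x. ln (Z x)) \<longleftrightarrow> integrable (PiM I (\<lambda>_. \<mu>)) F"
    unfolding ZF distrX[symmetric] by (rule integrable_distr_eq[OF Xm FmB, symmetric])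
  have int_eq: "(\<integral>x. ln (Z x) \<partial>N) = (\<integral>y. F y \<partial>PiM I (\<lambda>_. \<mu>))"
    unfolding ZF distrX[symmetric] by (rule integral_distr[OF Xm FmB, symmetric])
  have nn_eq: "(\<integral>\<^sup>+x. ennreal (exp (\<tau> * (ln (Z x) - c))) \<partial>N) = (\<integral>\<^sup>+y. ennreal (exp (\<tau> * (F y - c))) \<partial>PiM I (\<lambda>_. \<mu>))"
    for \<tau> c
    unfolding ZF distrX[symmetric] by (subst nn_integral_distr[OF Xm]) auto
  have main: "integrable (PiM I (\<lambda>_. \<mu>)) F \<and>
     (\<integral>\<^sup>+ x. ennreal (exp (\<tau> * (F x - (\<integral>y. F y \<partial>PiM I (\<lambda>_. \<mu>))))) \<partial>PiM I (\<lambda>_. \<mu>))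
       \<le> ennreal (exp (real (card I) * K * \<tau>\<^sup>2))" if tau: "\<bar>\<tau>\<bar> \<le> 1" for \<tau>
    using mgf_bound[OF mu u0s iU iL Kb tau Inz(2)] Fm QF by blast
  have intZ: "integrable N (\<lambda>x. ln (Z x))" using main[of 0] intF_eq by simp
  define c where "c = (\<integral>y. ln (Z y) \<partial>N)"
  have mgfN: "(\<integral>\<^sup>+x. ennreal (exp (\<tau> * (ln (Z x) - c))) \<partial>N) \<le> ennreal (exp (real n * K * \<tau>\<^sup>2))"
    if tau: "\<bar>\<tau>\<bar> \<le> 1" for \<tau>
    unfolding nn_eq c_def int_eq using main[OF tau] cardI by simp
  have sig: "\<bar>\<sigma> * \<tau>\<bar> \<le> 1" "(\<sigma> * \<tau>)\<^sup>2 = \<tau>\<^sup>2" if "\<sigma> \<in> {1, -1::real}" "\<bar>\<tau>\<bar> \<le> 1" for \<sigma> \<tau>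
    using that by (auto simp: abs_mult power_mult_distrib)
  have part1: "\<forall>t\<in>{0..1::real}. (\<integral>\<^sup>+ x. ennreal (exp (\<sigma> * t * (ln (Z x) - c))) \<partial>N) \<le> ennreal (exp (real n * K * t\<^sup>2))"
    if s: "\<sigma> \<in> {1, -1::real}" for \<sigma>
  proof
    fix t :: real assume "t \<in> {0..1}"
    hence t: "\<bar>t\<bar> \<le> 1" by auto
    show "(\<integral>\<^sup>+ x. ennreal (exp (\<sigma> * t * (ln (Z x) - c))) \<partial>N) \<le> ennreal (exp (real n * K * t\<^sup>2))"
      using mgfN[OF sig(1)[OF s t]] unfolding sig(2)[OF s t] .
  qed
  have lnZm[measurable]: "(\<lambda>x. ln (Z x)) \<in> borel_measurable N" using intZ by (rule borel_measurable_integrable)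
  have npos: "real n > 0" using n by simp
  have tail: "measure N {x\<in>space N. \<sigma> * (1 / real n) * (ln (Z x) - c) > y} \<le> exp (real n * K * \<tau>\<^sup>2) * exp (- (real n * \<tau>) * y)"
    if s: "\<sigma> \<in> {1, -1::real}" and tau: "0 \<le> \<tau>" "\<tau> \<le> 1" for \<sigma> \<tau> y
  proof (rule N.exp_markov)
    show "(\<lambda>x. \<sigma> * (1 / real n) * (ln (Z x) - c)) \<in> borel_measurable N" by measurable
    show "0 \<le> real n * \<tau>" using tau by simp
    show "0 \<le> exp (real n * K * \<tau>\<^sup>2)" by simp
    have t: "\<bar>\<tau>\<bar> \<le> 1" using tau by auto
    have "(\<integral>\<^sup>+ x. ennreal (exp (real n * \<tau> * (\<sigma> * (1 / real n) * (ln (Z x) - c)))) \<partial>N)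
        = (\<integral>\<^sup>+ x. ennreal (exp ((\<sigma> * \<tau>) * (ln (Z x) - c))) \<partial>N)"
      using npos by (intro nn_integral_cong) (simp add: field_simps)
    also have "\<dots> \<le> ennreal (exp (real n * K * \<tau>\<^sup>2))"
      using mgfN[OF sig(1)[OF s t]] unfolding sig(2)[OF s t] .
    finally show "(\<integral>\<^sup>+ x. ennreal (exp (real n * \<tau> * (\<sigma> * (1 / real n) * (ln (Z x) - c)))) \<partial>N)
        \<le> ennreal (exp (real n * K * \<tau>\<^sup>2))" .
  qed
  have part2: "measure N {x\<in>space N. \<sigma> * (1 / real n) * (ln (Z x) - c) > y} \<le> exp (- real n * y\<^sup>2 / (4 * K))"
    if s: "\<sigma> \<in> {1, -1::real}" and y: "0 < y" "y \<le> 2 * K" for \<sigma> y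
  proof -
    have Kp: "K > 0" using Kpos by simp
    have tau: "0 \<le> y / (2 * K)" "y / (2 * K) \<le> 1" using y Kp by (auto simp: field_simps)
    have "real n * K * (y / (2 * K))\<^sup>2 + - (real n * (y / (2 * K))) * y = - real n * y\<^sup>2 / (4 * K)"
      using Kp by (simp add: field_simps power2_eq_square)
    hence "exp (real n * K * (y / (2 * K))\<^sup>2) * exp (- (real n * (y / (2 * K))) * y) = exp (- real n * y\<^sup>2 / (4 * K))"
      by (simp add: exp_add[symmetric])
    thus ?thesis using tail[OF s tau, of y] by simp
  qed
  have part3: "measure N {x\<in>space N. \<sigma> * (1 / real n) * (ln (Z x) - c) > y} \<le> exp (- real n * (y - K))"
    if s: "\<sigma> \<in> {1, -1::real}" for \<sigma> y
  proof -
    have "exp (real n * K * 1\<^sup>2) * exp (- (real n * 1) * y) = exp (- real n * (y - K))"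
      by (simp add: exp_add[symmetric] algebra_simps)
    thus ?thesis using tail[OF s, of 1 y] by simp
  qed
  show ?thesis unfolding c_def[symmetric] using intZ part1 part2 part3 by blast
qed


end
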